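(* Let $R$ be an integral domain of characteristic $0$ and let $Z$ be a $\Leftrightarrow_R$-connected set of roots of unity in $R$. Then for any nonempty subset $Z'\subset Z$ the homomorphism $\rho^R_{Z,Z'}\colon R[q]^Z\to R[q]^{Z'}$ is injective.
   Context: All rings are commutative with unit; $q$ is an indeterminate. For a set $M$ of monic polynomials in $R[q]$, let $M^*$ be the multiplicative set it generates, directed by divisibility, and $R[q]^M=\varprojlim_{f\in M^*}R[q]/(f)$. For a set $Z$ of roots of unity in $R$, $R[q]^Z:=R[q]^{M_Z}$ where $M_Z=\{q-\zeta:\zeta\in Z\}$; for $Z'\subset Z$, $\rho^R_{Z,Z'}$ is induced by the identity of $R[q]$. For roots of unity $\zeta,\zeta'\in R$ write $\zeta\Leftrightarrow_R\zeta'$ if $R$ is $(\zeta-\zeta')$-adically separated, i.e. $\bigcap_{j\ge0}(\zeta-\zeta')^jR=(0)$ (equivalently, $\operatorname{ord}(\zeta^{-1}\zeta')$ is a power of a prime $p$ with $\bigcap_j p^jR=(0)$). A set $Z$ is $\Leftrightarrow_R$-connected if it is nonempty and any two elements are joined by a finite chain in $Z$ with consecutive elements related by $\Leftrightarrow_R$. *)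

theory Defs
  imports "HOL-Computational_Algebra.Polynomial" "HOL-Library.Multiset"
begin

definition mult_closure :: "'a::comm_ring_1 poly set \<Rightarrow> 'a poly set" where
  "mult_closure M = {prod_mset F | F. set_mset F \<subseteq> M}"

text \<open>An element of R[q]^M = lim_{f in M^*} R[q]/(f) is represented by a family x
  assigning to each f in M^* a representative x f of a residue class mod f,
  subject to compatibility along divisibility.\<close>
definition compatible_family :: "'a::comm_ring_1 poly set \<Rightarrow> ('a poly \<Rightarrow> 'a poly) \<Rightarrow> bool" where
  "compatible_family M x \<longleftrightarrow>
     (\<forall>f\<in>mult_closure M. \<forall>g\<in>mult_closure M. f dvd g \<longrightarrow> f dvd (x g - x f))"

definition limit_eq :: "'a::comm_ring_1 poly set \<Rightarrow> ('a poly \<Rightarrow> 'a poly) \<Rightarrow> ('a poly \<Rightarrow> 'a poly) \<Rightarrow> bool" where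
  "limit_eq M x y \<longleftrightarrow> (\<forall>f\<in>mult_closure M. f dvd (x f - y f))"

definition root_of_unity :: "'a::comm_ring_1 \<Rightarrow> bool" where
  "root_of_unity z \<longleftrightarrow> (\<exists>n>0. z ^ n = 1)"

definition M_of :: "'a::comm_ring_1 set \<Rightarrow> 'a poly set" where
  "M_of Z = {[:- z, 1:] | z. z \<in> Z}"

text \<open>zeta \<Leftrightarrow>_R zeta': R is (zeta - zeta')-adically separated.\<close>
definition adic_related :: "'a::comm_ring_1 \<Rightarrow> 'a \<Rightarrow> bool" where
  "adic_related z w \<longleftrightarrow> (\<forall>r. (\<forall>j::nat. (z - w) ^ j dvd r) \<longrightarrow> r = 0)"

definition adic_connected :: "'a::comm_ring_1 set \<Rightarrow> bool" where
  "adic_connected Z \<longleftrightarrow> Z \<noteq> {} \<and>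
     (\<forall>a\<in>Z. \<forall>b\<in>Z. (\<lambda>u v. u \<in> Z \<and> v \<in> Z \<and> adic_related u v)\<^sup>*\<^sup>* a b)"

text \<open>Injectivity of rho_{Z,Z'}: restriction of families from M_Z^* to M_{Z'}^*
  (induced by the identity of R[q]).\<close>
definition rho_injective :: "'a::comm_ring_1 set \<Rightarrow> 'a set \<Rightarrow> bool" where
  "rho_injective Z Z' \<longleftrightarrow>
     (\<forall>x y. compatible_family (M_of Z) x \<longrightarrow> compatible_family (M_of Z) y \<longrightarrow>
        limit_eq (M_of Z') x y \<longrightarrow> limit_eq (M_of Z) x y)"

end

theory Submission imports Defs begin

lemma shift_step: "monom 1 1 * (monom 1 k' * B + smult (c * t) C) + [:c:] * (monom 1 (Suc k') * B1 + smult t C1)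
  = monom 1 (Suc k') * (B + smult c B1) + smult (c * t) (monom 1 1 * C + C1)"
  for c t :: "'a::comm_ring_1"
proof -
  have s: "\<And>p. [:c:] * p = smult c p" by simp
  have m: "monom (1::'a) 1 * monom 1 k' = monom 1 (Suc k')" by (simp add: mult_monom)
  show ?thesis
    unfolding s distrib_left smult_add_right mult.assoc[symmetric] m
    by (simp add: smult_smult ac_simps)
qed

lemma shift_pow:
  fixes c :: "'a::comm_ring_1"
  shows "k \<le> N \<Longrightarrow> \<exists>B C. [:c,1:]^N = monom 1 k * B + smult (c^(N-k)) C"
proof (induction N arbitrary: k)
  case 0 then show ?case by (intro exI[of _ 0] exI[of _ 1]) auto
next
  case (Suc N)
  show ?case
  proof (cases "k = 0")
    case True
    have "[:c,1:]^Suc N = monom 1 k * [:c,1:]^Suc N + smult (c^(Suc N - k)) 0"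
      using True by (simp del: power_Suc add: monom_0)
    then show ?thesis by blast
  next
    case False
    show ?thesis
    proof (cases "k = Suc N")
      case True
      have "[:c,1:]^Suc N = monom 1 k * 0 + smult (c^(Suc N - k)) ([:c,1:]^Suc N)"
        using True by (simp del: power_Suc)
      then show ?thesis by blast
    next
      case False
      with \<open>k \<noteq> 0\<close> Suc.prems obtain k' where k: "k = Suc k'" "k' < N"
        by (cases k) auto
      obtain B C where BC: "[:c,1:]^N = monom 1 k' * B + smult (c^(N-k')) C"
        using Suc.IH[of k'] k by auto
      obtain B1 C1 where BC1: "[:c,1:]^N = monom 1 (Suc k') * B1 + smult (c^(N-Suc k')) C1"
        using Suc.IH[of "Suc k'"] k by auto
      have cc: "[:c,1:] = monom 1 1 + [:c:]" by (simp add: monom_altdef)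
      have "[:c,1:]^Suc N = monom 1 1 * [:c,1:]^N + [:c:] * [:c,1:]^N"
        by (simp del: power_Suc add: power_Suc[of _ N] cc distrib_right)
      also have "\<dots> = monom 1 1 * (monom 1 k' * B + smult (c^(N-k')) C)
           + [:c:] * (monom 1 (Suc k') * B1 + smult (c^(N-Suc k')) C1)"
        using BC BC1 by metis
      also have "\<dots> = monom 1 (Suc k') * (B + smult c B1) + smult (c^(N-k')) (monom 1 1 * C + C1)"
      proof -
        have e: "c^(N-k') = c * c^(N - Suc k')" using k
          by (metis Suc_diff_Suc power_Suc)
        show ?thesis unfolding e by (rule shift_step)
      qed
      finally have "[:c,1:]^Suc N = monom 1 k * (B + smult c B1) + smult (c^(Suc N - k)) (monom 1 1 * C + C1)"
        using k by simp
      then show ?thesis by blast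
    qed
  qed
qed

lemma pcompose_pow: "pcompose (p ^ n) r = (pcompose p r) ^ n"
  for p r :: "'a::comm_ring_1 poly"
  by (induction n) (simp_all add: pcompose_mult pcompose_1)

lemma pcompose_monom1: "pcompose (monom 1 n) r = r ^ n"
  for r :: "'a::comm_ring_1 poly"
proof -
  have "monom (1::'a) n = [:0,1:]^n" by (simp add: monom_altdef)
  then show ?thesis by (simp add: pcompose_pow pcompose_pCons)
qed

lemma pow_in_mc:
  assumes "z \<in> Z" shows "[:-z,1:]^n \<in> mult_closure (M_of Z)"
proof -
  have "[:-z,1:]^n = prod_mset (replicate_mset n [:-z,1:])" by simp
  moreover have "set_mset (replicate_mset n [:-z,1:]) \<subseteq> M_of Z"
    using assms by (auto simp: M_of_def)
  ultimately show ?thesis unfolding mult_closure_def by blast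
qed

lemma mult_in_mc:
  assumes "f \<in> mult_closure M" "g \<in> mult_closure M" shows "f * g \<in> mult_closure M"
proof -
  obtain F G where "f = prod_mset F" "set_mset F \<subseteq> M" "g = prod_mset G" "set_mset G \<subseteq> M"
    using assms unfolding mult_closure_def by blast
  then have "f * g = prod_mset (F + G)" "set_mset (F + G) \<subseteq> M" by auto
  then show ?thesis unfolding mult_closure_def by blast
qed

lemma propagate:
  fixes d :: "'a::comm_ring_1 poly \<Rightarrow> 'a poly"
  assumes cd: "\<forall>f\<in>mult_closure (M_of Z). \<forall>g\<in>mult_closure (M_of Z). f dvd g \<longrightarrow> f dvd (d g - d f)"
    and uZ: "u \<in> Z" and vZ: "v \<in> Z" and rel: "adic_related u v"
    and hu: "\<forall>n. [:-u,1:]^n dvd d ([:-u,1:]^n)"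
  shows "[:-v,1:]^n dvd d ([:-v,1:]^n)"
proof -
  define P where "P = d ([:-v,1:]^n)"
  define r where "r = [:v,1:]"
  have low: "\<forall>i<n. coeff (pcompose P r) i = 0"
  proof (intro allI impI)
    fix i assume "i < n"
    have "\<forall>j. (u - v)^j dvd coeff (pcompose P r) i"
    proof
      fix j
      define N where "N = n + j"
      define f where "f = [:-u,1:]^N * [:-v,1:]^n"
      have fM: "f \<in> mult_closure (M_of Z)" unfolding f_def
        by (intro mult_in_mc pow_in_mc uZ vZ)
      have uM: "[:-u,1:]^N \<in> mult_closure (M_of Z)" by (rule pow_in_mc[OF uZ])
      have vM: "[:-v,1:]^n \<in> mult_closure (M_of Z)" by (rule pow_in_mc[OF vZ])
      have "[:-u,1:]^N dvd d f - d ([:-u,1:]^N)" using cd fM uM unfolding f_def by auto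
      moreover have "[:-u,1:]^N dvd d ([:-u,1:]^N)" using hu by auto
      ultimately have "[:-u,1:]^N dvd d f" by (metis diff_add_cancel dvd_add)
      then obtain a where a: "d f = [:-u,1:]^N * a" by blast
      have "[:-v,1:]^n dvd d f - P" using cd fM vM unfolding f_def P_def by auto
      then obtain b where b: "d f - P = [:-v,1:]^n * b" by blast
      have PP: "P = [:-u,1:]^N * a - [:-v,1:]^n * b" unfolding a[symmetric] b[symmetric] by simp
      have c1: "pcompose [:-u,1:] r = [:v-u,1:]" by (simp add: r_def pcompose_pCons)
      have c2: "pcompose [:-v,1:] r = [:0,1:]" by (simp add: r_def pcompose_pCons)
      have m: "[:0,1:]^n = (monom 1 n :: 'a poly)" by (simp add: monom_altdef)
      have PC: "pcompose P r = [:v-u,1:]^N * pcompose a r - monom 1 n * pcompose b r"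
        by (simp add: PP pcompose_diff pcompose_mult pcompose_pow c1 c2 m)
      obtain B C where BC: "[:v-u,1:]^N = monom 1 n * B + smult ((v-u)^j) C"
        using shift_pow[of n N "v-u"] unfolding N_def by auto
      have "pcompose P r = monom 1 n * (B * pcompose a r - pcompose b r)
             + smult ((v-u)^j) (C * pcompose a r)"
        by (simp add: PC BC algebra_simps)
      then have "coeff (pcompose P r) i = (v-u)^j * coeff (C * pcompose a r) i"
        using \<open>i < n\<close> by (simp add: coeff_monom_mult)
      then have "(v-u)^j dvd coeff (pcompose P r) i" by simp
      moreover have "(v-u)^j = (-1)^j * (u-v)^j" by (simp flip: power_mult_distrib)
      ultimately show "(u - v)^j dvd coeff (pcompose P r) i"
        by (metis dvd_mult_right)
    qed
    then show "coeff (pcompose P r) i = 0" using rel unfolding adic_related_def by blast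
  qed
  then have "monom 1 n dvd pcompose P r" by (simp add: monom_1_dvd_iff')
  then obtain w where w: "pcompose P r = monom 1 n * w" by blast
  have c3: "pcompose r [:-v,1:] = [:0,1:]" by (simp add: r_def pcompose_pCons)
  have "P = pcompose (pcompose P r) [:-v,1:]"
    by (simp flip: pcompose_assoc add: c3)
  also have "\<dots> = [:-v,1:]^n * pcompose w [:-v,1:]"
    by (simp add: w pcompose_mult pcompose_monom1)
  finally show ?thesis unfolding P_def by (metis dvd_triv_left)
qed

lemma dvd_count:
  "[:-z,1:]^(count G z) dvd prod_mset (image_mset (\<lambda>z. [:-z,1:]) G)"
  for z :: "'a::comm_ring_1"
proof (induction G)
  case empty then show ?case by simp
next
  case (add a G)
  have e: "prod_mset (image_mset (\<lambda>z. [:-z,1:]) (add_mset a G)) = [:-a,1:] * prod_mset (image_mset (\<lambda>z. [:-z,1:]) G)"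
    by simp
  show ?case
  proof (cases "a = z")
    case True
    then have "[:-z,1:]^(count (add_mset a G) z) = [:-a,1:] * [:-z,1:]^(count G z)" by simp
    then show ?thesis unfolding e using mult_dvd_mono[OF dvd_refl add.IH] by metis
  next
    case False
    then have "count (add_mset a G) z = count G z" by simp
    then show ?thesis unfolding e using dvd_mult[OF add.IH] by metis
  qed
qed

lemma order_lin: "order z [:-a,1:] = (if z = a then 1 else 0)"
  for a :: "'a::idom"
proof (cases "z = a")
  case True then show ?thesis using order_power_n_n[of a 1] by simp
next
  case False
  then have "poly [:-a,1:] z \<noteq> 0" by simp
  then have "order z [:-a,1:] = 0" by (rule order_0I)
  then show ?thesis using False by simp
qed

lemma prod_dvd:
  fixes h :: "'a::idom poly"
  shows "h \<noteq> 0 \<Longrightarrow> (\<forall>z. count G z \<le> order z h) \<Longrightarrow> prod_mset (image_mset (\<lambda>z. [:-z,1:]) G) dvd h"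
proof (induction G arbitrary: h)
  case empty then show ?case by simp
next
  case (add a G)
  have "1 \<le> order a h" using add.prems(2)[rule_format, of a] by simp
  then have "[:-a,1:]^1 dvd h" using order_divides by blast
  then obtain h' where h: "h = [:-a,1:] * h'" by auto
  have h0: "h' \<noteq> 0" using h add.prems(1) by auto
  have "\<forall>z. count G z \<le> order z h'"
  proof
    fix z
    have "[:-a,1:] * h' \<noteq> 0" using h add.prems(1) by simp
    then have "order z h = order z [:-a,1:] + order z h'"
      unfolding h by (rule order_mult)
    then show "count G z \<le> order z h'"
      using add.prems(2)[rule_format, of z] by (auto simp: order_lin split: if_splits)
  qed
  then have "prod_mset (image_mset (\<lambda>z. [:-z,1:]) G) dvd h'" using add.IH h0 by blast
  moreover have "prod_mset (image_mset (\<lambda>z. [:-z,1:]) (add_mset a G)) = [:-a,1:] * prod_mset (image_mset (\<lambda>z. [:-z,1:]) G)"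
    by simp
  ultimately show ?case using h mult_dvd_mono[OF dvd_refl] by metis
qed

theorem theorem5p2:
  fixes Z Z' :: "'a::{idom, ring_char_0} set"
  assumes "\<forall>z\<in>Z. root_of_unity z"
    and "adic_connected Z"
    and "Z' \<subseteq> Z" and "Z' \<noteq> {}"
  shows "rho_injective Z Z'"
  unfolding rho_injective_def
proof (intro allI impI)
  fix x y :: "'a poly \<Rightarrow> 'a poly"
  assume cx: "compatible_family (M_of Z) x" and cy: "compatible_family (M_of Z) y"
    and le: "limit_eq (M_of Z') x y"
  define d where "d = (\<lambda>f. x f - y f)"
  have cd: "\<forall>f\<in>mult_closure (M_of Z). \<forall>g\<in>mult_closure (M_of Z). f dvd g \<longrightarrow> f dvd (d g - d f)"
  proof (intro ballI impI)
    fix f g assume "f \<in> mult_closure (M_of Z)" "g \<in> mult_closure (M_of Z)" "f dvd g"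
    then have "f dvd x g - x f" "f dvd y g - y f"
      using cx cy unfolding compatible_family_def by auto
    then have "f dvd (x g - x f) - (y g - y f)" by (rule dvd_diff)
    then show "f dvd d g - d f" by (simp add: d_def algebra_simps)
  qed
  obtain a where aZ': "a \<in> Z'" using assms(4) by blast
  have aZ: "a \<in> Z" using aZ' assms(3) by blast
  have ha: "\<forall>n. [:-a,1:]^n dvd d ([:-a,1:]^n)"
    using le pow_in_mc[OF aZ'] unfolding limit_eq_def d_def by blast
  have allZ: "\<forall>n. [:-b,1:]^n dvd d ([:-b,1:]^n)" if bZ: "b \<in> Z" for b
  proof -
    have "(\<lambda>u v. u \<in> Z \<and> v \<in> Z \<and> adic_related u v)\<^sup>*\<^sup>* a b"
      using assms(2) aZ bZ unfolding adic_connected_def by blast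
    then show ?thesis
    proof (induction rule: rtranclp_induct)
      case base then show ?case by (rule ha)
    next
      case (step u v)
      then show ?case using propagate[OF cd, of u v] by blast
    qed
  qed
  show "limit_eq (M_of Z) x y" unfolding limit_eq_def
  proof
    fix f assume fM: "f \<in> mult_closure (M_of Z)"
    then obtain F where F: "f = prod_mset F" "set_mset F \<subseteq> M_of Z"
      unfolding mult_closure_def by blast
    define G where "G = image_mset (\<lambda>p. - coeff p 0) F"
    have FG: "F = image_mset (\<lambda>z. [:-z,1:]) G"
    proof -
      have "image_mset (\<lambda>z. [:-z,1:]) G = image_mset (\<lambda>p. [:- (- coeff p 0),1:]) F"
        by (simp add: G_def multiset.map_comp o_def)
      also have "\<dots> = image_mset (\<lambda>p. p) F"
        by (rule image_mset_cong) (use F(2) in \<open>auto simp: M_of_def\<close>)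
      finally show ?thesis by simp
    qed
    have GZ: "set_mset G \<subseteq> Z" using F(2) by (auto simp: G_def M_of_def)
    show "f dvd x f - y f"
    proof (cases "d f = 0")
      case True then show ?thesis by (simp add: d_def)
    next
      case False
      have "\<forall>z. count G z \<le> order z (d f)"
      proof
        fix z
        show "count G z \<le> order z (d f)"
        proof (cases "z \<in># G")
          case False then show ?thesis by (simp add: not_in_iff)
        next
          case True
          then have zZ: "z \<in> Z" using GZ by blast
          have pm: "[:-z,1:]^(count G z) \<in> mult_closure (M_of Z)" by (rule pow_in_mc[OF zZ])
          have dv: "[:-z,1:]^(count G z) dvd f" using dvd_count[of z G] F(1) FG by simp
          have "[:-z,1:]^(count G z) dvd d f - d ([:-z,1:]^(count G z))"
            using cd pm fM dv by blast
          moreover have "[:-z,1:]^(count G z) dvd d ([:-z,1:]^(count G z))"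
            using allZ[OF zZ] by blast
          ultimately have "[:-z,1:]^(count G z) dvd d f" by (metis diff_add_cancel dvd_add)
          then show ?thesis using False order_divides by blast
        qed
      qed
      then have "prod_mset (image_mset (\<lambda>z. [:-z,1:]) G) dvd d f" using prod_dvd False by blast
      then show ?thesis using F(1) FG by (simp add: d_def)
    qed
  qed
qed

end
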